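(* Let $f:\mathbf{R}\to\mathbf{R}$ be additive. Then $f$ is everywhere surjective if and only if $f$ is surjective and not injective.
   Context: A function $f:\mathbf{R}\to\mathbf{R}$ is additive if $f(x+y)=f(x)+f(y)$ for all $x,y\in\mathbf{R}$. It is everywhere surjective if for every open interval $(a,b)$ with $a<b$ and every $y\in\mathbf{R}$ there exists $x\in(a,b)$ with $f(x)=y$. *)

theory Defs
  imports Main "HOL.Real"
begin

definition additive :: "(real \<Rightarrow> real) \<Rightarrow> bool" where
  "additive f \<longleftrightarrow> (\<forall>x y. f (x + y) = f x + f y)"

definition everywhere_surjective :: "(real \<Rightarrow> real) \<Rightarrow> bool" where
  "everywhere_surjective f \<longleftrightarrow>
     (\<forall>a b y. a < b \<longrightarrow> (\<exists>x. a < x \<and> x < b \<and> f x = y))"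

end

theory Submission
  imports Defs
begin

lemma add_nat:
  assumes "additive f" shows "f (real n * x) = real n * f x"
proof (induction n)
  case 0
  have "f 0 = f 0 + f 0" using assms unfolding additive_def by (metis add_0)
  then show ?case by simp
next
  case (Suc n)
  have "f (real (Suc n) * x) = f (real n * x + x)" by (simp add: algebra_simps)
  also have "\<dots> = f (real n * x) + f x" using assms unfolding additive_def by blast
  finally show ?case using Suc by (simp add: algebra_simps)
qed

lemma add_neg:
  assumes "additive f" shows "f (- x) = - f x"
proof -
  have "f 0 = 0" using add_nat[OF assms, of 0] by simp
  moreover have "f (x + - x) = f x + f (- x)" using assms unfolding additive_def by blast
  ultimately show ?thesis by simp
qed

lemma add_int:
  assumes "additive f" shows "f (real_of_int k * x) = real_of_int k * f x"
proof (cases "k \<ge> 0")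
  case True
  then obtain n where "k = int n" by (metis nonneg_eq_int)
  then show ?thesis using add_nat[OF assms] by simp
next
  case False
  define n where "n = nat (- k)"
  have n: "k = - int n" using False n_def by simp
  have "f (real_of_int k * x) = f (- (real n * x))" using n by simp
  also have "\<dots> = - (real n * f x)" using add_neg[OF assms] add_nat[OF assms] by simp
  finally show ?thesis using n by simp
qed

lemma add_rat:
  assumes "additive f" "f z = 0" "q \<in> \<rat>" shows "f (q * z) = 0"
proof -
  obtain m n where mn0: "n > 0" "q = real_of_int m / real_of_int n"
    using Rats_cases'[OF assms(3)] by blast
  hence mn: "q = real_of_int m / real_of_int n" "n \<noteq> 0" by auto
  have "real_of_int n * (q * z) = real_of_int m * z" using mn by simp
  hence "f (real_of_int n * (q * z)) = f (real_of_int m * z)" by (metis mult.assoc)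
  hence "real_of_int n * f (q * z) = real_of_int m * f z"
    unfolding add_int[OF assms(1)] .
  thus ?thesis using assms(2) mn(2) by simp
qed

theorem mainTheorem9:
  fixes f :: "real \<Rightarrow> real"
  assumes "additive f"
  shows "everywhere_surjective f \<longleftrightarrow> surj f \<and> \<not> inj f"
proof
  assume es: "everywhere_surjective f"
  have "surj f"
  proof -
    { fix y have "\<exists>x. 0 < x \<and> x < 1 \<and> f x = y" using es unfolding everywhere_surjective_def
        by simp
      hence "y \<in> range f" by blast }
    thus ?thesis by blast
  qed
  moreover obtain x where "1 < x" "x < 2" "f x = f 0"
  proof -
    have "\<exists>x. 1 < x \<and> x < 2 \<and> f x = f 0" using es unfolding everywhere_surjective_def
      by simp
    thus ?thesis using that by blast
  qed
  hence "\<not> inj f" unfolding inj_def by force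
  ultimately show "surj f \<and> \<not> inj f" by blast
next
  assume h: "surj f \<and> \<not> inj f"
  then obtain u v where uv: "u \<noteq> v" "f u = f v" unfolding inj_def by blast
  define z where "z = u - v"
  have z0: "z \<noteq> 0" using uv z_def by simp
  have fz: "f z = 0"
  proof -
    have "f z = f (u + - v)" by (simp add: z_def)
    also have "\<dots> = f u + f (- v)" using assms unfolding additive_def by blast
    finally show ?thesis using add_neg[OF assms, of v] uv by simp
  qed
  show "everywhere_surjective f"
    unfolding everywhere_surjective_def
  proof (intro allI impI)
    fix a b y :: real assume ab: "a < b"
    have "y \<in> range f" using h by simp
    then obtain w where w: "f w = y" by (metis imageE)
    obtain q where q: "q \<in> \<rat>" "a < w + q * z" "w + q * z < b"
    proof (cases "z > 0")
      case True
      have "(a - w)/z < (b - w)/z" using ab True by (simp add: divide_strict_right_mono)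
      then obtain q where "q \<in> \<rat>" "(a - w)/z < q" "q < (b - w)/z"
        using Rats_dense_in_real by blast
      then show ?thesis using that True by (simp add: field_simps)
    next
      case False
      hence zn: "z < 0" using z0 by simp
      have "(b - w)/z < (a - w)/z" using ab zn by (simp add: divide_strict_right_mono_neg)
      then obtain q where "q \<in> \<rat>" "(b - w)/z < q" "q < (a - w)/z"
        using Rats_dense_in_real by blast
      then show ?thesis using that zn by (simp add: field_simps)
    qed
    have "f (w + q * z) = y" using assms add_rat[OF assms fz q(1)] w
      unfolding additive_def by simp
    thus "\<exists>x. a < x \<and> x < b \<and> f x = y" using q by blast
  qed
qed

end
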